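(* Let $s\in\mathbb{Z}$ and let $f$ be any active face of $\square_{\alpha_s}$. Then $g_{\alpha_s}(f)$ is an active face of $\square_{\alpha_{s+1}}$.
   Context: Fix $d\ge1$, $\lambda>0$, $\alpha_s=\lambda2^s$ ($s\in\mathbb{Z}$), and grids $G_{\alpha_s}\subset\mathbb{R}^d$ with $G_{\alpha_0}=\lambda\mathbb{Z}^d$ and $G_{\alpha_{s+1}}=2(G_{\alpha_s}-O_s)+O_s+\frac{\alpha_s}{2}\varepsilon_s$ for some $O_s\in G_{\alpha_s}$, $\varepsilon_s\in\{-1,1\}^d$. $\mathrm{Vor}_G(x)$ is the Voronoi cell of $x$ in grid $G$. $\square_{\alpha_s}$ is the cubical complex of faces $\prod_j[x_j,x_j+m_j]$, $x\in G_{\alpha_s}$, $m_j\in\{0,\alpha_s\}$; a facet of a $k$-face is a $(k-1)$-face contained in it. $g_{\alpha_s}$ maps a vertex $x$ to the unique $y\in G_{\alpha_{s+1}}$ with $x\in\mathrm{Vor}_{G_{\alpha_{s+1}}}(y)$, and a face to the convex hull of the images of its vertices (which is a face of $\square_{\alpha_{s+1}}$). Let $P\subset\mathbb{R}^d$ be finite; $a_{\alpha_s}(p)$ is the grid point of $G_{\alpha_s}$ whose Voronoi cell contains $p$ (assumed unique), and $V_{\alpha_s}:=a_{\alpha_s}(P)$ is the set of active vertices. A face $f$ of $\square_{\alpha_s}$ is spanned by $V\subseteq G_{\alpha_s}$ if $f\cap V$ is non-empty and not contained in any facet of $f$. The active faces of $\square_{\alpha_s}$ are the faces spanned by $V_{\alpha_s}$.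 *)

theory Defs
  imports "HOL-Analysis.Analysis"
begin

definition alpha :: "real \<Rightarrow> int \<Rightarrow> real" where
  "alpha lam s = lam * 2 powi s"

definition grid_family ::
  "real \<Rightarrow> (int \<Rightarrow> (real^'n) set) \<Rightarrow> (int \<Rightarrow> real^'n) \<Rightarrow> (int \<Rightarrow> real^'n) \<Rightarrow> bool" where
  "grid_family lam G Oc eps \<longleftrightarrow>
     G 0 = {x. \<forall>j. \<exists>k::int. x $ j = lam * of_int k} \<and>
     (\<forall>s. Oc s \<in> G s \<and> (\<forall>j. eps s $ j = -1 \<or> eps s $ j = 1) \<and>
          G (s + 1) = (\<lambda>x. 2 *\<^sub>R (x - Oc s) + Oc s + (alpha lam s / 2) *\<^sub>R eps s) ` G s)"

definition vor :: "(real^'n) set \<Rightarrow> real^'n \<Rightarrow> (real^'n) set" where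
  "vor G x = {p. \<forall>y\<in>G. dist p x \<le> dist p y}"

text \<open>The grid point of G whose Voronoi cell contains p (a_alpha(p), and also g on vertices).\<close>
definition nearest :: "(real^'n) set \<Rightarrow> real^'n \<Rightarrow> real^'n" where
  "nearest G p = (THE y. y \<in> G \<and> p \<in> vor G y)"

definition cube_face :: "(real^'n) set \<Rightarrow> real \<Rightarrow> nat \<Rightarrow> (real^'n) set \<Rightarrow> bool" where
  "cube_face G a k f \<longleftrightarrow>
     (\<exists>x\<in>G. \<exists>m::real^'n. (\<forall>j. m $ j = 0 \<or> m $ j = a) \<and> card {j. m $ j = a} = k \<and>
        f = {p. \<forall>j. x $ j \<le> p $ j \<and> p $ j \<le> x $ j + m $ j})"

definition is_face :: "(real^'n) set \<Rightarrow> real \<Rightarrow> (real^'n) set \<Rightarrow> bool" where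
  "is_face G a f \<longleftrightarrow> (\<exists>k. cube_face G a k f)"

definition is_facet :: "(real^'n) set \<Rightarrow> real \<Rightarrow> (real^'n) set \<Rightarrow> (real^'n) set \<Rightarrow> bool" where
  "is_facet G a e f \<longleftrightarrow> (\<exists>k. cube_face G a (Suc k) f \<and> cube_face G a k e \<and> e \<subseteq> f)"

definition spanned :: "(real^'n) set \<Rightarrow> real \<Rightarrow> (real^'n) set \<Rightarrow> (real^'n) set \<Rightarrow> bool" where
  "spanned G a V f \<longleftrightarrow> is_face G a f \<and> f \<inter> V \<noteq> {} \<and> \<not> (\<exists>e. is_facet G a e f \<and> f \<inter> V \<subseteq> e)"

definition active_face ::
  "(real^'n) set \<Rightarrow> real \<Rightarrow> (real^'n) set \<Rightarrow> (real^'n) set \<Rightarrow> bool" where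
  "active_face G a P f \<longleftrightarrow> spanned G a (nearest G ` P) f"

text \<open>g on faces: convex hull of the images of the vertices (f \<inter> G) of f.\<close>
definition gface :: "(real^'n) set \<Rightarrow> (real^'n) set \<Rightarrow> (real^'n) set \<Rightarrow> (real^'n) set" where
  "gface G G' f = convex hull (nearest G' ` (f \<inter> G))"

end

theory Submission
  imports Defs
begin


definition latt :: "real^'n \<Rightarrow> real \<Rightarrow> (real^'n) set" where
  "latt c a = {x. \<forall>j. \<exists>k::int. x$j = c$j + a * of_int k}"

lemma alpha_Suc: "alpha lam (s + 1) = 2 * alpha lam s"
  unfolding alpha_def by (simp add: power_int_add)

lemma alpha_pos: "lam > 0 \<Longrightarrow> alpha lam s > 0"
  unfolding alpha_def by simp

lemma latt_shift:
  fixes c Ob :: "real^'n"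
  assumes "Ob \<in> latt c a" shows "latt c a = latt Ob a"
proof -
  from assms have "\<forall>j. \<exists>k::int. Ob$j = c$j + a * of_int k" unfolding latt_def by blast
  then obtain k0 where k0: "\<And>j. Ob$j = c$j + a * of_int (k0 j)" by metis
  show ?thesis unfolding latt_def
  proof (intro Collect_cong iffI allI)
    fix x :: "real^'n" and j
    assume "\<forall>j. \<exists>k::int. x$j = c$j + a * of_int k"
    then obtain k where "x$j = c$j + a * of_int k" by blast
    then show "\<exists>k::int. x$j = Ob$j + a * of_int k" using k0[of j]
      by (intro exI[of _ "k - k0 j"]) (simp add: algebra_simps)
  next
    fix x :: "real^'n" and j
    assume "\<forall>j. \<exists>k::int. x$j = Ob$j + a * of_int k"
    then obtain k where "x$j = Ob$j + a * of_int k" by blast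
    then show "\<exists>k::int. x$j = c$j + a * of_int k" using k0[of j]
      by (intro exI[of _ "k + k0 j"]) (simp add: algebra_simps)
  qed
qed

lemma latt_up:
  assumes "G = latt Ob a" "G' = (\<lambda>x. 2 *\<^sub>R (x - Ob) + Ob + (a/2) *\<^sub>R e) ` G"
  shows "G' = latt (Ob + (a/2) *\<^sub>R e) (2*a)"
proof
  show "G' \<subseteq> latt (Ob + (a/2) *\<^sub>R e) (2*a)"
  proof
    fix y assume "y \<in> G'"
    then obtain x where x: "x \<in> latt Ob a" "y = 2 *\<^sub>R (x - Ob) + Ob + (a/2) *\<^sub>R e"
      using assms by blast
    show "y \<in> latt (Ob + (a/2) *\<^sub>R e) (2*a)" unfolding latt_def
    proof (intro CollectI allI)
      fix j
      obtain k where "x$j = Ob$j + a * of_int k" using x(1) unfolding latt_def by blast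
      moreover have "y$j = 2*(x$j - Ob$j) + Ob$j + (a/2)*e$j" using x(2) by simp
      ultimately show "\<exists>k::int. y$j = (Ob + (a/2) *\<^sub>R e)$j + 2*a * of_int k"
        by (intro exI[of _ k]) (simp add: algebra_simps)
    qed
  qed
next
  show "latt (Ob + (a/2) *\<^sub>R e) (2*a) \<subseteq> G'"
  proof
    fix y assume "y \<in> latt (Ob + (a/2) *\<^sub>R e) (2*a)"
    then have "\<forall>j. \<exists>k::int. y$j = (Ob + (a/2) *\<^sub>R e)$j + 2*a * of_int k" unfolding latt_def by blast
    then obtain k where k: "\<And>j. y$j = (Ob + (a/2) *\<^sub>R e)$j + 2*a * of_int (k j)" by metis
    define x where "x = (\<chi> j. Ob$j + a * of_int (k j))"
    have "x \<in> G" unfolding assms(1) latt_def x_def by auto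
    moreover have "y = 2 *\<^sub>R (x - Ob) + Ob + (a/2) *\<^sub>R e"
      by (simp add: vec_eq_iff x_def k algebra_simps)
    ultimately show "y \<in> G'" using assms(2) by blast
  qed
qed

lemma latt_down:
  assumes "G' = latt c (2*a)" "G' = (\<lambda>x. 2 *\<^sub>R (x - Ob) + Ob + (a/2) *\<^sub>R e) ` G" "a \<noteq> 0"
  shows "G = latt ((1/2) *\<^sub>R (c + Ob - (a/2) *\<^sub>R e)) a"
proof
  show "G \<subseteq> latt ((1/2) *\<^sub>R (c + Ob - (a/2) *\<^sub>R e)) a"
  proof
    fix x assume "x \<in> G"
    then have "2 *\<^sub>R (x - Ob) + Ob + (a/2) *\<^sub>R e \<in> latt c (2*a)" using assms by blast
    then show "x \<in> latt ((1/2) *\<^sub>R (c + Ob - (a/2) *\<^sub>R e)) a" unfolding latt_def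
    proof (intro CollectI allI)
      fix j assume "2 *\<^sub>R (x - Ob) + Ob + (a/2) *\<^sub>R e \<in> {x. \<forall>j. \<exists>k::int. x$j = c$j + 2*a * of_int k}"
      then obtain k::int where "2 * (x$j - Ob$j) + Ob$j + (a/2) * e$j = c$j + 2*a * of_int k" by auto
      then show "\<exists>k::int. x$j = ((1/2) *\<^sub>R (c + Ob - (a/2) *\<^sub>R e))$j + a * of_int k"
        by (intro exI[of _ k]) (simp add: algebra_simps)
    qed
  qed
next
  show "latt ((1/2) *\<^sub>R (c + Ob - (a/2) *\<^sub>R e)) a \<subseteq> G"
  proof
    fix x assume x: "x \<in> latt ((1/2) *\<^sub>R (c + Ob - (a/2) *\<^sub>R e)) a"
    have "2 *\<^sub>R (x - Ob) + Ob + (a/2) *\<^sub>R e \<in> latt c (2*a)" unfolding latt_def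
    proof (intro CollectI allI)
      fix j
      obtain k::int where "x$j = ((1/2) *\<^sub>R (c + Ob - (a/2) *\<^sub>R e))$j + a * of_int k"
        using x unfolding latt_def by blast
      then show "\<exists>k::int. (2 *\<^sub>R (x - Ob) + Ob + (a/2) *\<^sub>R e)$j = c$j + 2*a * of_int k"
        by (intro exI[of _ k]) (simp add: algebra_simps)
    qed
    then obtain x' where "x' \<in> G" "2 *\<^sub>R (x - Ob) + Ob + (a/2) *\<^sub>R e = 2 *\<^sub>R (x' - Ob) + Ob + (a/2) *\<^sub>R e"
      using assms by blast
    then have "\<forall>i. x$i = x'$i" by (simp add: vec_eq_iff)
    then have "x = x'" by (simp add: vec_eq_iff)
    then show "x \<in> G" using \<open>x' \<in> G\<close> by simp
  qed
qed

lemma grid_latt: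
  assumes "lam > 0" "grid_family lam G Oc eps"
  shows "\<exists>c. G s = latt c (alpha lam s)"
proof (induction s rule: int_induct[where k=0])
  case base
  have "G 0 = latt 0 (alpha lam 0)" using assms(2) unfolding grid_family_def latt_def alpha_def
    by (simp add: mult.commute)
  then show ?case by blast
next
  case (step1 i)
  then obtain c where c: "G i = latt c (alpha lam i)" by blast
  have Ob: "Oc i \<in> G i" using assms(2) unfolding grid_family_def by blast
  have "G (i+1) = latt (Oc i + (alpha lam i/2) *\<^sub>R eps i) (2*alpha lam i)"
    by (rule latt_up[OF _ ]) (use c Ob latt_shift[of "Oc i" c] assms(2) in \<open>auto simp: grid_family_def\<close>)
  then show ?case by (auto simp: alpha_Suc)
next
  case (step2 i)
  then obtain c where c: "G i = latt c (alpha lam i)" by blast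
  have e: "G i = G ((i - 1) + 1)" by simp
  have "G (i - 1) = latt ((1/2) *\<^sub>R (c + Oc (i-1) - (alpha lam (i-1)/2) *\<^sub>R eps (i-1))) (alpha lam (i-1))"
  proof (rule latt_down)
    show "G (i - 1 + 1) = latt c (2 * alpha lam (i - 1))" using c alpha_Suc[of lam "i-1"] by simp
    show "G (i - 1 + 1) = (\<lambda>x. 2 *\<^sub>R (x - Oc (i - 1)) + Oc (i - 1) + (alpha lam (i - 1) / 2) *\<^sub>R eps (i - 1)) ` G (i - 1)"
      using assms(2) unfolding grid_family_def by blast
    show "alpha lam (i - 1) \<noteq> 0" using alpha_pos[OF assms(1)] by (metis less_irrefl)
  qed
  then show ?case by blast
qed



definition qf :: "real \<Rightarrow> int \<Rightarrow> int" where
  "qf e k = (if e = 1 then k div 2 else (k+1) div 2)"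

lemma qf_step: "qf e (k+1) = qf e k \<or> qf e (k+1) = qf e k + 1"
  unfolding qf_def by (cases "e = 1"; simp; presburger)

lemma coord1:
  assumes "a > 0" "e = 1 \<or> e = -1"
  shows "\<bar>a * of_int k - (a/2*e + 2*a* of_int (qf e k))\<bar> = a/2"
proof -
  define r where "r = k - 2 * qf e k"
  have r: "(e = 1 \<and> (r = 0 \<or> r = 1)) \<or> (e = -1 \<and> (r = 0 \<or> r = -1))"
    using assms(2) unfolding r_def qf_def by auto
  have eq: "a * of_int k - (a/2*e + 2*a* of_int (qf e k)) = a * (of_int r - e/2)"
    unfolding r_def by (simp add: algebra_simps)
  show ?thesis unfolding eq using r assms(1) by (auto simp: abs_mult)
qed

lemma coord_ge:
  assumes "a > 0" "e = 1 \<or> e = -1" "q \<noteq> qf e k"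
  shows "\<bar>a * of_int k - (a/2*e + 2*a* of_int q)\<bar> \<ge> 3*a/2"
proof -
  define n where "n = k - 2 * q"
  have n: "(e = 1 \<and> (n \<le> -1 \<or> n \<ge> 2)) \<or> (e = -1 \<and> (n \<le> -2 \<or> n \<ge> 1))"
    using assms(2,3) unfolding n_def qf_def by auto
  have n': "(e = 1 \<and> (of_int n \<le> (-1::real) \<or> of_int n \<ge> (2::real))) \<or> (e = -1 \<and> (of_int n \<le> (-2::real) \<or> of_int n \<ge> (1::real)))"
    using n by linarith
  have eq: "a * of_int k - (a/2*e + 2*a* of_int q) = a * (of_int n - e/2)"
    unfolding n_def by (simp add: algebra_simps)
  have "\<bar>of_int n - e/2\<bar> \<ge> 3/2" using n' by auto
  then have "a * \<bar>of_int n - e/2\<bar> \<ge> a * (3/2)" using assms(1) by (intro mult_left_mono) auto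
  then show ?thesis unfolding eq using assms(1) by (simp add: abs_mult)
qed

lemma coord_vor:
  assumes "a > 0" "e = 1 \<or> e = -1" "\<bar>p - a * of_int k\<bar> \<le> a/2"
  shows "\<bar>p - (a/2*e + 2*a* of_int (qf e k))\<bar> \<le> \<bar>p - (a/2*e + 2*a* of_int q)\<bar>"
proof (cases "q = qf e k")
  case True then show ?thesis by simp
next
  case False
  define g where "g = a/2*e + 2*a* of_int (qf e k)"
  have "\<bar>a * of_int k - g\<bar> = a/2" unfolding g_def by (rule coord1[OF assms(1,2)])
  then have pg: "\<bar>p - g\<bar> \<le> a" using assms(3) by linarith
  have "of_int q - of_int (qf e k) \<noteq> (0::real)" using False by simp
  then have "\<bar>of_int q - of_int (qf e k)\<bar> \<ge> (1::real)"
    by (metis of_int_diff of_int_1_le_iff abs_ge_zero zero_less_abs_iff of_int_abs of_int_eq_0_iff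
        int_one_le_iff_zero_less)
  then have "2*a*\<bar>of_int q - of_int (qf e k)\<bar> \<ge> 2*a" using assms(1) by simp
  moreover have "(a/2*e + 2*a* of_int q) - g = 2*a*(of_int q - of_int (qf e k))"
    unfolding g_def by (simp add: algebra_simps)
  ultimately have "\<bar>(a/2*e + 2*a* of_int q) - g\<bar> \<ge> 2*a" using assms(1) by (simp add: abs_mult)
  then show ?thesis using pg unfolding g_def[symmetric] by linarith
qed

lemma dist_sq_vec: "(dist (x::real^'n) y)^2 = (\<Sum>i\<in>UNIV. (x$i - y$i)^2)"
  unfolding dist_vec_def L2_set_def dist_real_def
  by (simp add: sum_nonneg)

lemma dist_vec_le:
  fixes x y z :: "real^'n"
  assumes "\<And>j. \<bar>x$j - y$j\<bar> \<le> \<bar>x$j - z$j\<bar>"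
  shows "dist x y \<le> dist x z"
  unfolding dist_vec_def dist_real_def
  by (rule L2_set_mono) (use assms in auto)

lemma dist_vec_less:
  fixes x y z :: "real^'n"
  assumes "\<And>j. \<bar>x$j - y$j\<bar> \<le> \<bar>x$j - z$j\<bar>" "\<bar>x$j0 - y$j0\<bar> < \<bar>x$j0 - z$j0\<bar>"
  shows "dist x y < dist x z"
proof -
  have "(\<Sum>i\<in>UNIV. (x$i - y$i)^2) < (\<Sum>i\<in>UNIV. (x$i - z$i)^2)"
  proof (rule sum_strict_mono_ex1)
    show "\<forall>i\<in>UNIV. (x$i - y$i)^2 \<le> (x$i - z$i)^2"
      using assms(1) by (metis abs_ge_zero power2_abs power_mono)
    show "\<exists>i\<in>UNIV. (x$i - y$i)^2 < (x$i - z$i)^2"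
      using assms(2) by (metis UNIV_I abs_ge_zero power2_abs power_strict_mono zero_less_numeral)
  qed simp
  then have "(dist x y)^2 < (dist x z)^2" by (simp add: dist_sq_vec)
  then show ?thesis by (simp add: power_less_imp_less_base)
qed



definition kidx :: "real \<Rightarrow> real \<Rightarrow> real \<Rightarrow> int" where
  "kidx o1 a r = \<lfloor>(r - o1)/a\<rfloor>"

lemma kidx_eq: "a \<noteq> 0 \<Longrightarrow> kidx o1 a (o1 + a * of_int k) = k"
  unfolding kidx_def by simp

definition gam :: "real^'n \<Rightarrow> real \<Rightarrow> real^'n \<Rightarrow> 'n \<Rightarrow> real \<Rightarrow> real" where
  "gam Ob a e j r = Ob$j + a/2 * e$j + 2*a * of_int (qf (e$j) (kidx (Ob$j) a r))"

definition gg :: "real^'n \<Rightarrow> real \<Rightarrow> real^'n \<Rightarrow> real^'n \<Rightarrow> real^'n" where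
  "gg Ob a e v = (\<chi> j. gam Ob a e j (v$j))"

lemma gg_in: "gg Ob a e v \<in> latt (Ob + (a/2) *\<^sub>R e) (2*a)"
  unfolding latt_def gg_def gam_def by (auto simp: algebra_simps)

lemma in_latt_coord:
  assumes "y \<in> latt c a" obtains k where "y$j = c$j + a * of_int k"
  using assms unfolding latt_def by blast

lemma vertex_coord:
  fixes Ob e :: "real^'n"
  assumes a: "a > 0" and e: "\<forall>j. e$j = 1 \<or> e$j = -1" and v: "v \<in> latt Ob a"
    and y: "y \<in> latt (Ob + (a/2) *\<^sub>R e) (2*a)"
  shows "\<bar>v$j - gg Ob a e v $ j\<bar> \<le> \<bar>v$j - y$j\<bar>"
    and "y$j \<noteq> gg Ob a e v $ j \<Longrightarrow> \<bar>v$j - gg Ob a e v $ j\<bar> < \<bar>v$j - y$j\<bar>"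
proof -
  obtain k where k: "v$j = Ob$j + a * of_int k" using v by (rule in_latt_coord)
  obtain q where q: "y$j = (Ob + (a/2) *\<^sub>R e)$j + 2*a * of_int q" using y by (rule in_latt_coord)
  have g: "gg Ob a e v $ j = Ob$j + a/2 * e$j + 2*a * of_int (qf (e$j) k)"
    unfolding gg_def gam_def using k a by (simp add: kidx_eq)
  have e1: "\<bar>v$j - gg Ob a e v $ j\<bar> = a/2"
    using coord1[OF a e[rule_format, of j], of k] unfolding g k by (simp add: algebra_simps)
  have e2: "q \<noteq> qf (e$j) k \<Longrightarrow> \<bar>v$j - y$j\<bar> \<ge> 3*a/2"
    using coord_ge[OF a e[rule_format, of j], of q k] unfolding q k by (simp add: algebra_simps)
  have e3: "q = qf (e$j) k \<Longrightarrow> y$j = gg Ob a e v $ j" unfolding q g by simp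
  show "\<bar>v$j - gg Ob a e v $ j\<bar> \<le> \<bar>v$j - y$j\<bar>"
    using e1 e2 e3 a by fastforce
  show "y$j \<noteq> gg Ob a e v $ j \<Longrightarrow> \<bar>v$j - gg Ob a e v $ j\<bar> < \<bar>v$j - y$j\<bar>"
    using e1 e2 e3 a by fastforce
qed

lemma nearest_vertex:
  fixes Ob e :: "real^'n"
  assumes a: "a > 0" and e: "\<forall>j. e$j = 1 \<or> e$j = -1" and v: "v \<in> latt Ob a"
  shows "nearest (latt (Ob + (a/2) *\<^sub>R e) (2*a)) v = gg Ob a e v"
proof -
  let ?G = "latt (Ob + (a/2) *\<^sub>R e) (2*a)"
  let ?g = "gg Ob a e v"
  have le: "dist v ?g \<le> dist v y" if "y \<in> ?G" for y
    by (rule dist_vec_le) (rule vertex_coord[OF a e v that])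
  have lt: "dist v ?g < dist v y" if yG: "y \<in> ?G" and ny: "y \<noteq> ?g" for y
  proof -
    obtain j where "y$j \<noteq> ?g$j" using ny by (metis vec_eq_iff)
    show ?thesis
      by (rule dist_vec_less) (rule vertex_coord[OF a e v yG], rule vertex_coord(2)[OF a e v yG \<open>y$j \<noteq> ?g$j\<close>])
  qed
  have ex: "\<exists>!y. y \<in> ?G \<and> v \<in> vor ?G y"
  proof (rule ex1I[of _ ?g])
    show "?g \<in> ?G \<and> v \<in> vor ?G ?g" using gg_in le unfolding vor_def by blast
    fix y assume "y \<in> ?G \<and> v \<in> vor ?G y"
    then show "y = ?g" using lt[of y] gg_in[of Ob a e v] unfolding vor_def by force
  qed
  show ?thesis unfolding nearest_def
    by (rule the1_equality[OF ex]) (use gg_in le in \<open>auto simp: vor_def\<close>)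
qed

lemma sum_one_le:
  fixes F F' :: "'n::finite \<Rightarrow> real"
  assumes "\<And>i. i \<noteq> j \<Longrightarrow> F i = F' i" "sum F UNIV \<le> sum F' UNIV"
  shows "F j \<le> F' j"
proof -
  have "sum F UNIV = F j + sum F (UNIV - {j})" by (simp add: sum.remove)
  moreover have "sum F' UNIV = F' j + sum F' (UNIV - {j})" by (simp add: sum.remove)
  moreover have "sum F (UNIV - {j}) = sum F' (UNIV - {j})" using assms(1) by (intro sum.cong) auto
  ultimately show ?thesis using assms(2) by linarith
qed

lemma vor_coord:
  fixes Ob :: "real^'n"
  assumes a: "a > 0" and y: "y \<in> latt Ob a" and p: "p \<in> vor (latt Ob a) y"
  shows "\<bar>p$j - y$j\<bar> \<le> a/2"
proof -
  define d where "d = p$j - y$j"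
  have one: "(p$j - y$j)^2 \<le> (p$j - (y$j + s))^2" if s: "s = a \<or> s = -a" for s
  proof -
    define y' where "y' = (\<chi> i. if i = j then y$i + s else y$i)"
    have "y' \<in> latt Ob a" unfolding y'_def latt_def
    proof (intro CollectI allI)
      fix i
      obtain k where k: "y$i = Ob$i + a * of_int k" using y by (rule in_latt_coord)
      show "\<exists>k::int. (\<chi> i. if i = j then y$i + s else y$i) $ i = Ob$i + a * of_int k"
      proof (cases "i = j")
        case True
        then show ?thesis using s k
          by (intro exI[of _ "if s = a then k + 1 else k - 1"]) (auto simp: algebra_simps)
      next
        case False then show ?thesis using k by auto
      qed
    qed
    then have "dist p y \<le> dist p y'" using p unfolding vor_def by blast
    then have "(dist p y)^2 \<le> (dist p y')^2" by (simp add: power_mono)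
    then have "(\<Sum>i\<in>UNIV. (p$i - y$i)^2) \<le> (\<Sum>i\<in>UNIV. (p$i - y'$i)^2)" by (simp add: dist_sq_vec)
    then have "(\<lambda>i. (p$i - y$i)^2) j \<le> (\<lambda>i. (p$i - y'$i)^2) j"
      by (rule sum_one_le[rotated]) (simp add: y'_def)
    then show ?thesis by (simp add: y'_def)
  qed
  have h1: "d^2 \<le> (d - a)^2" using one[of a] unfolding d_def by (simp add: algebra_simps)
  have h2: "d^2 \<le> (d + a)^2" using one[of "-a"] unfolding d_def by (simp add: algebra_simps)
  have "0 \<le> a * (a - 2*d)" using h1 by (simp add: power2_eq_square algebra_simps)
  then have "0 \<le> a - 2*d" using a by (simp add: zero_le_mult_iff)
  moreover have "0 \<le> a * (a + 2*d)" using h2 by (simp add: power2_eq_square algebra_simps)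
  then have "0 \<le> a + 2*d" using a by (simp add: zero_le_mult_iff)
  ultimately have "d \<le> a/2" "-d \<le> a/2" by linarith+
  then show ?thesis unfolding d_def abs_le_iff by blast
qed

lemma nearest_P:
  fixes Ob e :: "real^'n"
  assumes a: "a > 0" and e: "\<forall>j. e$j = 1 \<or> e$j = -1"
    and u1: "\<exists>!y. y \<in> latt Ob a \<and> p \<in> vor (latt Ob a) y"
    and u2: "\<exists>!y. y \<in> latt (Ob + (a/2) *\<^sub>R e) (2*a) \<and> p \<in> vor (latt (Ob + (a/2) *\<^sub>R e) (2*a)) y"
  shows "nearest (latt Ob a) p \<in> latt Ob a"
    and "nearest (latt (Ob + (a/2) *\<^sub>R e) (2*a)) p = gg Ob a e (nearest (latt Ob a) p)"
proof -
  let ?G = "latt (Ob + (a/2) *\<^sub>R e) (2*a)"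
  define y1 where "y1 = nearest (latt Ob a) p"
  have y1: "y1 \<in> latt Ob a \<and> p \<in> vor (latt Ob a) y1"
    unfolding y1_def nearest_def by (rule theI'[OF u1])
  then show "nearest (latt Ob a) p \<in> latt Ob a" unfolding y1_def by blast
  let ?g = "gg Ob a e y1"
  have le: "dist p ?g \<le> dist p z" if z: "z \<in> ?G" for z
  proof (rule dist_vec_le)
    fix j
    obtain k where k: "y1$j = Ob$j + a * of_int k" using y1 by (meson in_latt_coord)
    obtain q where q: "z$j = (Ob + (a/2) *\<^sub>R e)$j + 2*a * of_int q" using z by (rule in_latt_coord)
    have g: "?g $ j = Ob$j + a/2 * e$j + 2*a * of_int (qf (e$j) k)"
      unfolding gg_def gam_def using k a by (simp add: kidx_eq)
    have "\<bar>p$j - y1$j\<bar> \<le> a/2" using vor_coord[OF a] y1 by blast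
    then have "\<bar>(p$j - Ob$j) - a * of_int k\<bar> \<le> a/2" unfolding k by (simp add: algebra_simps)
    from coord_vor[OF a e[rule_format, of j] this, of q]
    show "\<bar>p$j - ?g$j\<bar> \<le> \<bar>p$j - z$j\<bar>" unfolding g q by (simp add: algebra_simps)
  qed
  have "?g \<in> ?G \<and> p \<in> vor ?G ?g" using gg_in le unfolding vor_def by blast
  then show "nearest ?G p = gg Ob a e (nearest (latt Ob a) p)"
    unfolding y1_def[symmetric] unfolding nearest_def by (rule the1_equality[OF u2])
qed



definition bx :: "real^'n \<Rightarrow> real^'n \<Rightarrow> (real^'n) set" where
  "bx x m = {p. \<forall>j. x$j \<le> p$j \<and> p$j \<le> x$j + m$j}"

lemma hull_box:
  fixes l u :: "real^'n"
  assumes lu: "\<And>j. l$j \<le> u$j"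
  shows "convex hull {w. \<forall>j. w$j = l$j \<or> w$j = u$j} = {p. \<forall>j. l$j \<le> p$j \<and> p$j \<le> u$j}"
proof
  let ?V = "{w. \<forall>j. w$j = l$j \<or> w$j = u$j}"
  have box: "{p. \<forall>j. l$j \<le> p$j \<and> p$j \<le> u$j} = cbox l u" by (auto simp: mem_box_cart)
  show "convex hull ?V \<subseteq> {p. \<forall>j. l$j \<le> p$j \<and> p$j \<le> u$j}"
  proof (unfold box, rule hull_minimal)
    show "?V \<subseteq> cbox l u"
    proof
      fix w assume "w \<in> ?V"
      then have "\<And>j. w$j = l$j \<or> w$j = u$j" by blast
      then show "w \<in> cbox l u" unfolding mem_box_cart(2)
      proof (intro allI)
        fix j
        have "w$j = l$j \<or> w$j = u$j" by fact
        then show "l$j \<le> w$j \<and> w$j \<le> u$j" using lu[of j] by auto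
      qed
    qed
  qed (rule convex_box)
  define S where "S J = {p::real^'n. \<forall>j. (j\<in>J \<longrightarrow> l$j \<le> p$j \<and> p$j \<le> u$j) \<and> (j\<notin>J \<longrightarrow> p$j = l$j \<or> p$j = u$j)}" for J
  have "finite J \<Longrightarrow> S J \<subseteq> convex hull ?V" for J
  proof (induction J rule: finite_induct)
    case empty
    have "S {} = ?V" unfolding S_def by auto
    then show ?case by (simp add: hull_subset)
  next
    case (insert j J)
    show ?case
    proof
      fix p assume p: "p \<in> S (insert j J)"
      show "p \<in> convex hull ?V"
      proof (cases "l$j = u$j")
        case True
        have "p \<in> S J" unfolding S_def mem_Collect_eq
        proof (intro allI)
          fix i
          have pi: "(i \<in> insert j J \<longrightarrow> l$i \<le> p$i \<and> p$i \<le> u$i) \<and> (i \<notin> insert j J \<longrightarrow> p$i = l$i \<or> p$i = u$i)"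
            using p unfolding S_def by blast
          show "(i \<in> J \<longrightarrow> l$i \<le> p$i \<and> p$i \<le> u$i) \<and> (i \<notin> J \<longrightarrow> p$i = l$i \<or> p$i = u$i)"
          proof (cases "i = j")
            case True then show ?thesis using pi \<open>l$j = u$j\<close> insert.hyps(2) by auto
          next
            case False then show ?thesis using pi by auto
          qed
        qed
        then show ?thesis using insert.IH by blast
      next
        case False
        then have lt: "l$j < u$j" using lu[of j] by simp
        define pl where "pl = (\<chi> i. if i = j then l$j else p$i)"
        define pu where "pu = (\<chi> i. if i = j then u$j else p$i)"
        have "pl \<in> S J" "pu \<in> S J" using p insert.hyps(2) unfolding S_def pl_def pu_def by auto
        then have h: "pl \<in> convex hull ?V" "pu \<in> convex hull ?V" using insert.IH by blast+
        define t where "t = (p$j - l$j) / (u$j - l$j)"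
        have pj: "l$j \<le> p$j" "p$j \<le> u$j" using p unfolding S_def by auto
        have t0: "0 \<le> t" "t \<le> 1" unfolding t_def using lt pj by (auto simp: field_simps)
        have "p = (1 - t) *\<^sub>R pl + t *\<^sub>R pu"
        proof (subst vec_eq_iff, intro allI)
          fix i show "p$i = ((1 - t) *\<^sub>R pl + t *\<^sub>R pu)$i"
          proof (cases "i = j")
            case True
            have "(1 - t) * l$j + t * u$j = l$j + t * (u$j - l$j)" by (simp add: algebra_simps)
            also have "\<dots> = p$j" unfolding t_def using lt by simp
            finally show ?thesis using True by (simp add: pl_def pu_def)
          next
            case False then show ?thesis by (simp add: pl_def pu_def algebra_simps)
          qed
        qed
        then show ?thesis using convexD[OF convex_convex_hull h, of "1 - t" t] t0 by simp
      qed
    qed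
  qed
  from this[of UNIV] show "{p. \<forall>j. l$j \<le> p$j \<and> p$j \<le> u$j} \<subseteq> convex hull ?V"
    unfolding S_def by simp
qed

lemma bx_eq:
  assumes "bx x m = bx x' m'" "\<And>j. m$j \<ge> 0" "\<And>j. m'$j \<ge> 0"
  shows "m = m'"
proof -
  have "x \<in> bx x m" "x + m \<in> bx x m" "x' \<in> bx x' m'" "x' + m' \<in> bx x' m'"
    using assms(2,3) unfolding bx_def by auto
  then have "x \<in> bx x' m'" "x + m \<in> bx x' m'" "x' \<in> bx x m" "x' + m' \<in> bx x m"
    using assms(1) by auto
  then have "\<forall>j. m$j = m'$j" unfolding bx_def mem_Collect_eq vector_add_component
  proof -
    assume h: "\<forall>j. x' $ j \<le> x $ j \<and> x $ j \<le> x' $ j + m' $ j"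
     "\<forall>j. x' $ j \<le> x $ j + m $ j \<and> x $ j + m $ j \<le> x' $ j + m' $ j"
     "\<forall>j. x $ j \<le> x' $ j \<and> x' $ j \<le> x $ j + m $ j"
     "\<forall>j. x $ j \<le> x' $ j + m' $ j \<and> x' $ j + m' $ j \<le> x $ j + m $ j"
    show ?thesis
    proof
      fix j
      from h(1)[rule_format, of j] h(2)[rule_format, of j] h(3)[rule_format, of j] h(4)[rule_format, of j]
      show "m$j = m'$j" by linarith
    qed
  qed
  then show ?thesis by (simp add: vec_eq_iff)
qed



lemma face_vertices:
  fixes Ob x m :: "real^'n"
  assumes a: "a > 0" and x: "x \<in> latt Ob a" and m: "\<forall>j. m$j = 0 \<or> m$j = a"
    and v1: "v \<in> bx x m" and v2: "v \<in> latt Ob a"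
  shows "v$j = x$j \<or> (m$j = a \<and> v$j = x$j + a)"
proof -
  obtain k where k: "x$j = Ob$j + a * of_int k" using x by (rule in_latt_coord)
  obtain k' where k': "v$j = Ob$j + a * of_int k'" using v2 by (rule in_latt_coord)
  have b: "x$j \<le> v$j" "v$j \<le> x$j + m$j" using v1 unfolding bx_def by auto
  have mj: "m$j \<le> a" using m a by (metis order_refl less_imp_le)
  have "0 \<le> a * of_int (k' - k)" using b k k' by (simp add: algebra_simps)
  then have "0 \<le> k' - k" using a by (simp add: zero_le_mult_iff)
  have "a * of_int (k' - k) \<le> a * 1" using b k k' mj by (simp add: algebra_simps)
  then have "of_int (k' - k) \<le> (1::real)" using a by (simp add: mult_le_cancel_left_pos)
  then have "k' - k \<le> 1" by linarith
  with \<open>0 \<le> k' - k\<close> have "k' = k \<or> k' = k + 1" by linarith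
  then show ?thesis
  proof
    assume "k' = k" then show ?thesis using k k' by simp
  next
    assume "k' = k + 1"
    then have "v$j = x$j + a" using k k' by (simp add: algebra_simps)
    moreover then have "m$j = a" using b m a by (metis add_le_cancel_left not_less order_refl)
    ultimately show ?thesis by simp
  qed
qed

lemma gam_coord:
  assumes "a \<noteq> 0" "x$j = Ob$j + a * of_int k"
  shows "gam Ob a e j (x$j) = Ob$j + a/2 * e$j + 2*a * of_int (qf (e$j) k)"
    and "gam Ob a e j (x$j + a) = Ob$j + a/2 * e$j + 2*a * of_int (qf (e$j) (k+1))"
proof -
  show "gam Ob a e j (x$j) = Ob$j + a/2 * e$j + 2*a * of_int (qf (e$j) k)"
    unfolding gam_def assms(2) using assms(1) by (simp add: kidx_eq)
  have "x$j + a = Ob$j + a * of_int (k+1)" using assms(2) by (simp add: algebra_simps)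
  then have "kidx (Ob$j) a (x$j + a) = k + 1" using kidx_eq[OF assms(1), of "Ob$j" "k+1"] by simp
  then show "gam Ob a e j (x$j + a) = Ob$j + a/2 * e$j + 2*a * of_int (qf (e$j) (k+1))"
    unfolding gam_def by simp
qed

lemma gface_shape:
  fixes Ob x m e :: "real^'n"
  assumes a: "a > 0" and e: "\<forall>j. e$j = 1 \<or> e$j = -1" and x: "x \<in> latt Ob a"
    and m: "\<forall>j. m$j = 0 \<or> m$j = a"
  shows "gface (latt Ob a) (latt (Ob + (a/2) *\<^sub>R e) (2*a)) (bx x m) = bx (gg Ob a e x) (gg Ob a e (x + m) - gg Ob a e x)"
    and "\<forall>j. (gg Ob a e (x + m) - gg Ob a e x)$j = 0 \<or> (gg Ob a e (x + m) - gg Ob a e x)$j = 2*a"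
    and "\<forall>j. (gg Ob a e (x + m) - gg Ob a e x)$j \<noteq> 0 \<longrightarrow> m$j = a"
proof -
  let ?Gs = "latt Ob a" and ?G' = "latt (Ob + (a/2) *\<^sub>R e) (2*a)"
  define l where "l = gg Ob a e x"
  define u where "u = gg Ob a e (x + m)"
  have lj: "l$j = gam Ob a e j (x$j)" for j unfolding l_def gg_def by simp
  have uj: "u$j = gam Ob a e j (x$j + m$j)" for j unfolding u_def gg_def by simp
  have diff0: "((u - l)$j = 0 \<or> (u - l)$j = 2*a) \<and> ((u - l)$j \<noteq> 0 \<longrightarrow> m$j = a)" for j
  proof -
    obtain k where k: "x$j = Ob$j + a * of_int k" using x by (rule in_latt_coord)
    have an: "a \<noteq> 0" using a by simp
    note g = gam_coord[OF an k, of e]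
    have "qf (e$j) (k+1) = qf (e$j) k \<or> qf (e$j) (k+1) = qf (e$j) k + 1" by (rule qf_step)
    moreover have "m$j = 0 \<or> m$j = a" using m by blast
    moreover have "m$j = 0 \<Longrightarrow> (u - l)$j = 0" by (simp add: lj uj)
    moreover have "m$j = a \<Longrightarrow> (u - l)$j = 2*a * (of_int (qf (e$j) (k+1)) - of_int (qf (e$j) k))"
    proof -
      assume "m$j = a"
      then have "(u - l)$j = gam Ob a e j (x$j + a) - gam Ob a e j (x$j)" by (simp add: lj uj)
      also have "\<dots> = 2*a * (of_int (qf (e$j) (k+1)) - of_int (qf (e$j) k))"
        unfolding g by (simp add: algebra_simps)
      finally show ?thesis .
    qed
    ultimately show ?thesis using a by auto
  qed
  then have diff: "(u - l)$j = 0 \<or> (u - l)$j = 2*a" "(u - l)$j \<noteq> 0 \<longrightarrow> m$j = a" for j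
    by blast+
  then show "\<forall>j. (gg Ob a e (x + m) - gg Ob a e x)$j = 0 \<or> (gg Ob a e (x + m) - gg Ob a e x)$j = 2*a"
    and "\<forall>j. (gg Ob a e (x + m) - gg Ob a e x)$j \<noteq> 0 \<longrightarrow> m$j = a"
    unfolding l_def u_def by blast+
  have lu: "l$j \<le> u$j" for j using diff(1)[of j] a by auto
  have img: "nearest ?G' ` (bx x m \<inter> ?Gs) = {w. \<forall>j. w$j = l$j \<or> w$j = u$j}"
  proof
    show "nearest ?G' ` (bx x m \<inter> ?Gs) \<subseteq> {w. \<forall>j. w$j = l$j \<or> w$j = u$j}"
    proof
      fix w assume "w \<in> nearest ?G' ` (bx x m \<inter> ?Gs)"
      then obtain v where v: "v \<in> bx x m" "v \<in> ?Gs" "w = nearest ?G' v" by blast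
      then have w: "w = gg Ob a e v" using nearest_vertex[OF a e] by simp
      show "w \<in> {w. \<forall>j. w$j = l$j \<or> w$j = u$j}"
      proof (intro CollectI allI)
        fix j
        have "v$j = x$j \<or> (m$j = a \<and> v$j = x$j + a)" by (rule face_vertices[OF a x m v(1,2)])
        then show "w$j = l$j \<or> w$j = u$j" unfolding w lj uj gg_def by auto
      qed
    qed
    show "{w. \<forall>j. w$j = l$j \<or> w$j = u$j} \<subseteq> nearest ?G' ` (bx x m \<inter> ?Gs)"
    proof
      fix w assume w: "w \<in> {w. \<forall>j. w$j = l$j \<or> w$j = u$j}"
      define v where "v = (\<chi> j. if w$j = l$j then x$j else x$j + m$j)"
      have vG: "v \<in> ?Gs" unfolding latt_def
      proof (intro CollectI allI)
        fix j
        obtain k where k: "x$j = Ob$j + a * of_int k" using x by (rule in_latt_coord)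
        have "m$j = 0 \<or> m$j = a" using m by blast
        then show "\<exists>k::int. v$j = Ob$j + a * of_int k"
          unfolding v_def using k
          by (intro exI[of _ "if w$j = l$j \<or> m$j = 0 then k else k+1"]) (auto simp: algebra_simps)
      qed
      have m0: "0 \<le> m$j" for j using m[rule_format, of j] a by auto
      have vb: "v \<in> bx x m" unfolding bx_def v_def using m0 by auto
      have "gg Ob a e v = w" unfolding vec_eq_iff
      proof
        fix j
        have "w$j = l$j \<or> w$j = u$j" using w by blast
        then show "gg Ob a e v $ j = w$j" using lj[of j] uj[of j] unfolding gg_def v_def by auto
      qed
      then have "nearest ?G' v = w" using nearest_vertex[OF a e vG] by simp
      then show "w \<in> nearest ?G' ` (bx x m \<inter> ?Gs)" using vG vb by blast
    qed
  qed
  show "gface ?Gs ?G' (bx x m) = bx (gg Ob a e x) (gg Ob a e (x + m) - gg Ob a e x)"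
    unfolding gface_def img hull_box[OF lu] unfolding l_def[symmetric] u_def[symmetric] bx_def
    by auto
qed



theorem lemma7:
  fixes lam :: real and G :: "int \<Rightarrow> (real^'n) set" and Oc eps :: "int \<Rightarrow> real^'n"
    and P f :: "(real^'n) set" and s :: int
  assumes "lam > 0"
    and "grid_family lam G Oc eps"
    and "finite P"
    and "\<forall>t. \<forall>p\<in>P. \<exists>!y. y \<in> G t \<and> p \<in> vor (G t) y"
    and "active_face (G s) (alpha lam s) P f"
  shows "active_face (G (s + 1)) (alpha lam (s + 1)) P (gface (G s) (G (s + 1)) f)"
proof -
  define a where "a = alpha lam s"
  define Ob where "Ob = Oc s"
  define e where "e = eps s"
  have a: "a > 0" using alpha_pos assms(1) a_def by simp
  have an: "a \<noteq> 0" using a by simp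
  have e: "\<forall>j. e$j = 1 \<or> e$j = -1" using assms(2) unfolding grid_family_def e_def by blast
  obtain c where c: "G s = latt c a" using grid_latt[OF assms(1,2)] a_def by blast
  have "Ob \<in> G s" using assms(2) unfolding grid_family_def Ob_def by blast
  then have Gs: "G s = latt Ob a" using latt_shift[of Ob c a] c by simp
  have im: "G (s+1) = (\<lambda>x. 2 *\<^sub>R (x - Ob) + Ob + (a/2) *\<^sub>R e) ` G s"
    using assms(2) unfolding grid_family_def Ob_def e_def a_def by blast
  have G1: "G (s+1) = latt (Ob + (a/2) *\<^sub>R e) (2*a)" by (rule latt_up[OF Gs im])
  have A1: "alpha lam (s+1) = 2*a" using alpha_Suc a_def by simp
  let ?Gs = "latt Ob a" and ?G' = "latt (Ob + (a/2) *\<^sub>R e) (2*a)"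
  have uP0: "\<forall>p\<in>P. \<exists>!y. y \<in> G s \<and> p \<in> vor (G s) y" using assms(4) by (rule spec)
  then have uP: "\<forall>p\<in>P. \<exists>!y. y \<in> ?Gs \<and> p \<in> vor ?Gs y" by (simp only: Gs)
  have uP0': "\<forall>p\<in>P. \<exists>!y. y \<in> G (s+1) \<and> p \<in> vor (G (s+1)) y" using assms(4) by (rule spec)
  then have uP': "\<forall>p\<in>P. \<exists>!y. y \<in> ?G' \<and> p \<in> vor ?G' y" by (simp only: G1)
  have nP1: "nearest ?Gs p \<in> ?Gs" if "p \<in> P" for p
    by (rule nearest_P(1)[OF a e uP[rule_format, OF that] uP'[rule_format, OF that]])
  have nP2: "nearest ?G' p = gg Ob a e (nearest ?Gs p)" if "p \<in> P" for p
    by (rule nearest_P(2)[OF a e uP[rule_format, OF that] uP'[rule_format, OF that]])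
  define V where "V = nearest ?Gs ` P"
  define V' where "V' = nearest ?G' ` P"
  have VG: "V \<subseteq> ?Gs" unfolding V_def using nP1 by blast
  have ggV: "gg Ob a e v \<in> V'" if "v \<in> V" for v
    using that nP2 unfolding V_def V'_def by force
  have hyp: "spanned ?Gs a V f" using assms(5) unfolding active_face_def Gs a_def[symmetric] V_def .
  then obtain k where "cube_face ?Gs a k f" unfolding spanned_def is_face_def by blast
  then obtain x m where x: "x \<in> ?Gs" and m: "\<forall>j. m$j = 0 \<or> m$j = a"
    and card: "card {j. m$j = a} = k" and fx0: "f = {p. \<forall>j. x$j \<le> p$j \<and> p$j \<le> x$j + m$j}"
    unfolding cube_face_def by blast
  have fx: "f = bx x m" unfolding bx_def by (rule fx0)
  note shape = gface_shape[OF a e x m]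
  define l where "l = gg Ob a e x"
  define d where "d = gg Ob a e (x + m) - gg Ob a e x"
  have F: "gface ?Gs ?G' f = bx l d" unfolding fx l_def d_def by (rule shape(1))
  have d: "\<forall>j. d$j = 0 \<or> d$j = 2*a" "\<forall>j. d$j \<noteq> 0 \<longrightarrow> m$j = a"
    unfolding d_def using shape(2,3) by blast+
  have inF: "gg Ob a e v \<in> gface ?Gs ?G' f \<inter> V'" if v: "v \<in> f \<inter> V" for v
  proof -
    have "v \<in> f \<inter> ?Gs" using v VG by blast
    then have "nearest ?G' v \<in> nearest ?G' ` (f \<inter> ?Gs)" by blast
    then have "nearest ?G' v \<in> gface ?Gs ?G' f" unfolding gface_def by (rule hull_inc)
    moreover have "nearest ?G' v = gg Ob a e v" using nearest_vertex[OF a e] v VG by blast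
    ultimately show ?thesis using ggV v by auto
  qed
  have H: "\<exists>v\<in>f \<inter> V. v$j \<noteq> b" if mj: "m$j = a" and b: "b = x$j \<or> b = x$j + a" for j b
  proof -
    define x' where "x' = (\<chi> i. if i = j then b else x$i)"
    define m' where "m' = (\<chi> i. if i = j then 0 else m$i)"
    define E where "E = bx x' m'"
    have setm: "{i. m'$i = a} = {i. m$i = a} - {j}" unfolding m'_def using an by auto
    have jin: "j \<in> {i. m$i = a}" using mj by simp
    have c1: "card {i. m'$i = a} = k - 1" unfolding setm using jin card by (simp add: card_Diff_singleton)
    have "k \<ge> 1" unfolding card[symmetric] using jin by (metis One_nat_def Suc_leI card_gt_0_iff empty_iff finite)
    then have kS: "k = Suc (k - 1)" by simp
    have "card {j. m$j = a} = Suc (k - 1)" using card kS by simp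
    then have cf1: "cube_face ?Gs a (Suc (k - 1)) f"
      unfolding cube_face_def using x m fx0 by blast
    have x'G: "x' \<in> ?Gs" unfolding latt_def
    proof (intro CollectI allI)
      fix i
      obtain kk where kk: "x$i = Ob$i + a * of_int kk" using x by (rule in_latt_coord)
      show "\<exists>k::int. x'$i = Ob$i + a * of_int k"
        unfolding x'_def using kk b
        by (intro exI[of _ "if i = j \<and> b = x$j + a then kk + 1 else kk"]) (auto simp: algebra_simps)
    qed
    have m'v: "\<forall>i. m'$i = 0 \<or> m'$i = a" unfolding m'_def using m by simp
    have cf2: "cube_face ?Gs a (k - 1) E"
      unfolding cube_face_def E_def bx_def
      by (rule bexI[OF _ x'G], rule exI[of _ m']) (use m'v c1 in simp)
    have m0: "0 \<le> m$i" for i using m[rule_format, of i] a by auto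
    have sub: "E \<subseteq> f"
    proof
      fix p assume "p \<in> E"
      then have p: "\<forall>i. x'$i \<le> p$i \<and> p$i \<le> x'$i + m'$i" unfolding E_def bx_def by blast
      show "p \<in> f" unfolding fx bx_def
      proof (intro CollectI allI)
        fix i show "x$i \<le> p$i \<and> p$i \<le> x$i + m$i"
          using p[rule_format, of i] b mj a unfolding x'_def m'_def by (cases "i = j") auto
      qed
    qed
    have "is_facet ?Gs a E f" unfolding is_facet_def using cf1 cf2 sub by blast
    then have "\<not> (f \<inter> V \<subseteq> E)" using hyp unfolding spanned_def by blast
    then obtain v where v: "v \<in> f \<inter> V" "v \<notin> E" by blast
    have "v$j \<noteq> b"
    proof
      assume vb: "v$j = b"
      have "v \<in> E" unfolding E_def bx_def
      proof (intro CollectI allI)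
        fix i
        have "x$i \<le> v$i \<and> v$i \<le> x$i + m$i" using v(1) unfolding fx bx_def by blast
        then show "x'$i \<le> v$i \<and> v$i \<le> x'$i + m'$i" unfolding x'_def m'_def using vb by auto
      qed
      then show False using v(2) by blast
    qed
    then show ?thesis using v(1) by blast
  qed
  have vert: "v$j = x$j \<or> (m$j = a \<and> v$j = x$j + a)" if "v \<in> f \<inter> V" for v j
    using face_vertices[OF a x m] that VG unfolding fx by blast
  have H1: "\<exists>v\<in>f \<inter> V. v$j = x$j" if "m$j = a" for j
    using H[OF that, of "x$j + a"] vert by force
  have H2: "\<exists>v\<in>f \<inter> V. v$j = x$j + a" if "m$j = a" for j
    using H[OF that, of "x$j"] vert by force
  have goal: "spanned ?G' (2*a) V' (gface ?Gs ?G' f)"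
    unfolding spanned_def
  proof (intro conjI)
    show "is_face ?G' (2*a) (gface ?Gs ?G' f)"
      unfolding is_face_def cube_face_def F bx_def l_def
      by (rule exI[of _ "card {j. d$j = 2*a}"], rule bexI[OF _ gg_in], rule exI[of _ d]) (use d(1) in simp)
    obtain v where "v \<in> f \<inter> V" using hyp unfolding spanned_def by blast
    then show "gface ?Gs ?G' f \<inter> V' \<noteq> {}" using inF by blast
    show "\<not> (\<exists>E. is_facet ?G' (2*a) E (gface ?Gs ?G' f) \<and> gface ?Gs ?G' f \<inter> V' \<subseteq> E)"
    proof
      assume "\<exists>E. is_facet ?G' (2*a) E (gface ?Gs ?G' f) \<and> gface ?Gs ?G' f \<inter> V' \<subseteq> E"
      then obtain E k' where cF: "cube_face ?G' (2*a) (Suc k') (gface ?Gs ?G' f)"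
        and cE: "cube_face ?G' (2*a) k' E" and EV: "gface ?Gs ?G' f \<inter> V' \<subseteq> E"
        unfolding is_facet_def by blast
      obtain x'' m'' where m'': "\<forall>j. m''$j = 0 \<or> m''$j = 2*a" "card {j. m''$j = 2*a} = Suc k'"
        and Fx: "gface ?Gs ?G' f = bx x'' m''"
        using cF unfolding cube_face_def bx_def by blast
      obtain y n where n: "\<forall>j. n$j = 0 \<or> n$j = 2*a" "card {j. n$j = 2*a} = k'"
        and Ey: "E = bx y n"
        using cE unfolding cube_face_def bx_def by blast
      have "m'' = d"
      proof (rule bx_eq)
        show "bx x'' m'' = bx l d" using Fx F by simp
        show "0 \<le> m''$j" for j using m''(1)[rule_format, of j] a by auto
        show "0 \<le> d$j" for j using d(1)[rule_format, of j] a by auto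
      qed
      then have cd: "card {j. d$j = 2*a} = Suc k'" using m''(2) by simp
      obtain j where dj: "d$j = 2*a" and nj: "n$j \<noteq> 2*a"
      proof (rule ccontr)
        assume "\<not> thesis"
        then have "{j. d$j = 2*a} \<subseteq> {j. n$j = 2*a}" using that by blast
        then have "card {j. d$j = 2*a} \<le> card {j. n$j = 2*a}" by (intro card_mono) auto
        then show False using cd n(2) by simp
      qed
      have nj0: "n$j = 0" using n(1) nj by blast
      have mj: "m$j = a" using d(2) dj an by auto
      obtain v1 where v1: "v1 \<in> f \<inter> V" "v1$j = x$j" using H1[OF mj] by blast
      obtain v2 where v2: "v2 \<in> f \<inter> V" "v2$j = x$j + a" using H2[OF mj] by blast
      have "gg Ob a e v1 \<in> E" "gg Ob a e v2 \<in> E" using inF[OF v1(1)] inF[OF v2(1)] EV by blast+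
      then have "y$j \<le> gg Ob a e v1 $ j \<and> gg Ob a e v1 $ j \<le> y$j + n$j"
        "y$j \<le> gg Ob a e v2 $ j \<and> gg Ob a e v2 $ j \<le> y$j + n$j" unfolding Ey bx_def by blast+
      then have "gg Ob a e v1 $ j = y$j" "gg Ob a e v2 $ j = y$j" using nj0 by linarith+
      moreover have "gg Ob a e v1 $ j = gg Ob a e x $ j" using v1(2) unfolding gg_def by simp
      moreover have "gg Ob a e v2 $ j = gg Ob a e (x + m) $ j" using v2(2) mj unfolding gg_def by simp
      ultimately have "d$j = 0" unfolding d_def by simp
      then show False using dj an by simp
    qed
  qed
  show ?thesis unfolding active_face_def G1 A1 Gs[symmetric] V'_def[symmetric]
    using goal unfolding Gs .
qed

end
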